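(* Let $\mathbf v=(v_1,\dots,v_m)$ and $\mathbf k=(k_1,\dots,k_m)$ be $m$-tuples of positive integers with $k_i\le v_i$ for all $i$ and $\sum_i k_i\ge 2$. Then \[ C(\mathbf v,\mathbf k,2)\ \ge\ \max_{\substack{1\le i\le m\\ k_i\neq 1}} C(v_i,k_i,2). \]
   Context: Let $X_1,\dots,X_m$ be pairwise disjoint sets with $|X_i|=v_i$. A block is an $m$-tuple $(B_1,\dots,B_m)$ with $B_i\subseteq X_i$, $|B_i|=k_i$. An $m$-tuple of sets $(T_1,\dots,T_m)$ is $(\mathbf v,\mathbf k,2)$-admissible if $T_i\subseteq X_i$, $|T_i|\le k_i$ and $\sum|T_i|=2$; it is contained in a block if $T_i\subseteq B_i$ for all $i$. A ${\rm GC}(\mathbf v,\mathbf k,2)$ is a finite family (repetitions allowed) of blocks containing every admissible tuple in at least one block; $C(\mathbf v,\mathbf k,2)$ is the minimum number of blocks. For integers $v\ge k\ge 2$, $C(v,k,2)$ is the ordinary covering number: the minimum number of $k$-subsets of a $v$-set such that every $2$-subset is contained in at least one of them. *)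

theory Defs
  imports Main
begin

text \<open>Component i (for i < m) has ground set X_i = {..<v i}; the components are
  kept apart by indexing, which models pairwise disjoint X_1,...,X_m.
  Tuples of sets are functions nat => nat set, only the values at i < m matter.\<close>

definition gc_block :: "nat \<Rightarrow> (nat \<Rightarrow> nat) \<Rightarrow> (nat \<Rightarrow> nat) \<Rightarrow> (nat \<Rightarrow> nat set) \<Rightarrow> bool" where
  "gc_block m v k B \<longleftrightarrow> (\<forall>i<m. B i \<subseteq> {..<v i} \<and> card (B i) = k i)"

definition gc_admissible :: "nat \<Rightarrow> (nat \<Rightarrow> nat) \<Rightarrow> (nat \<Rightarrow> nat) \<Rightarrow> (nat \<Rightarrow> nat set) \<Rightarrow> bool" where
  "gc_admissible m v k T \<longleftrightarrow>
     (\<forall>i<m. T i \<subseteq> {..<v i} \<and> card (T i) \<le> k i) \<and> (\<Sum>i<m. card (T i)) = 2"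

definition gc_contained :: "nat \<Rightarrow> (nat \<Rightarrow> nat set) \<Rightarrow> (nat \<Rightarrow> nat set) \<Rightarrow> bool" where
  "gc_contained m T B \<longleftrightarrow> (\<forall>i<m. T i \<subseteq> B i)"

definition is_GC :: "nat \<Rightarrow> (nat \<Rightarrow> nat) \<Rightarrow> (nat \<Rightarrow> nat) \<Rightarrow> (nat \<Rightarrow> nat set) list \<Rightarrow> bool" where
  "is_GC m v k F \<longleftrightarrow> (\<forall>B\<in>set F. gc_block m v k B) \<and>
     (\<forall>T. gc_admissible m v k T \<longrightarrow> (\<exists>B\<in>set F. gc_contained m T B))"

definition GC_num :: "nat \<Rightarrow> (nat \<Rightarrow> nat) \<Rightarrow> (nat \<Rightarrow> nat) \<Rightarrow> nat" where
  "GC_num m v k = (LEAST n. \<exists>F. is_GC m v k F \<and> length F = n)"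

definition is_covering :: "nat \<Rightarrow> nat \<Rightarrow> nat set list \<Rightarrow> bool" where
  "is_covering v k F \<longleftrightarrow> (\<forall>B\<in>set F. B \<subseteq> {..<v} \<and> card B = k) \<and>
     (\<forall>P. P \<subseteq> {..<v} \<and> card P = 2 \<longrightarrow> (\<exists>B\<in>set F. P \<subseteq> B))"

definition cov_num :: "nat \<Rightarrow> nat \<Rightarrow> nat" where
  "cov_num v k = (LEAST n. \<exists>F. is_covering v k F \<and> length F = n)"

end

theory Submission
  imports Defs "HOL-Library.FuncSet"
begin

lemma GC_exists:
  assumes "\<forall>i<m. k i \<le> v i"
  shows "\<exists>F. is_GC m v k F"
proof -
  define ext where "ext T = (\<lambda>i. if i < m then (SOME B. T i \<subseteq> B \<and> B \<subseteq> {..<v i} \<and> card B = k i) else undefined)" for T :: "nat \<Rightarrow> nat set"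
  have ext: "i < m \<Longrightarrow> T i \<subseteq> ext T i \<and> ext T i \<subseteq> {..<v i} \<and> card (ext T i) = k i"
    if "gc_admissible m v k T" for T i
  proof -
    assume i: "i < m"
    have "\<exists>B. T i \<subseteq> B \<and> B \<subseteq> {..<v i} \<and> card B = k i"
      using that i assms by (intro exists_subset_between) (auto simp: gc_admissible_def)
    then have "(\<lambda>B. T i \<subseteq> B \<and> B \<subseteq> {..<v i} \<and> card B = k i) (SOME B. T i \<subseteq> B \<and> B \<subseteq> {..<v i} \<and> card B = k i)"
      by (rule someI_ex)
    then show ?thesis unfolding ext_def using i by simp
  qed
  define A where "A = ext ` {T. gc_admissible m v k T}"
  have "A \<subseteq> (\<Pi>\<^sub>E i \<in> {..<m}. Pow {..<v i})"
  proof
    fix B assume "B \<in> A"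
    then obtain T where T: "gc_admissible m v k T" "B = ext T" unfolding A_def by blast
    show "B \<in> (\<Pi>\<^sub>E i \<in> {..<m}. Pow {..<v i})"
    proof (rule PiE_I)
      fix i assume "i \<in> {..<m}"
      then show "B i \<in> Pow {..<v i}" using ext[OF T(1)] T(2) by blast
    next
      fix i assume "i \<notin> {..<m}"
      then show "B i = undefined" using T(2) by (simp add: ext_def)
    qed
  qed
  moreover have "finite (\<Pi>\<^sub>E i \<in> {..<m}. Pow {..<v i})"
    by (intro finite_PiE) auto
  ultimately have "finite A" by (rule finite_subset)
  then obtain F where F: "set F = A" using finite_list by blast
  have "is_GC m v k F"
    unfolding is_GC_def F
  proof (intro conjI ballI allI impI)
    fix B assume "B \<in> A"
    then obtain T where "gc_admissible m v k T" "B = ext T" unfolding A_def by blast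
    then show "gc_block m v k B" unfolding gc_block_def using ext by blast
  next
    fix T assume T: "gc_admissible m v k T"
    then have "ext T \<in> A" unfolding A_def by blast
    moreover have "gc_contained m T (ext T)" unfolding gc_contained_def using ext[OF T] by blast
    ultimately show "\<exists>B\<in>A. gc_contained m T B" by blast
  qed
  then show ?thesis by blast
qed

lemma GC_cov:
  assumes "is_GC m v k F" "i < m" "k i \<ge> 2"
  shows "is_covering (v i) (k i) (map (\<lambda>B. B i) F)"
  unfolding is_covering_def
proof (intro conjI allI impI)
  show "\<forall>B\<in>set (map (\<lambda>B. B i) F). B \<subseteq> {..<v i} \<and> card B = k i"
    using assms by (auto simp: is_GC_def gc_block_def)
next
  fix P assume P: "P \<subseteq> {..<v i} \<and> card P = 2"
  define T where "T = (\<lambda>j. if j = i then P else {})"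
  have "(\<Sum>j<m. card (T j)) = (\<Sum>j<m. if j = i then 2 else 0)"
    by (rule sum.cong) (auto simp: T_def P)
  also have "\<dots> = 2" using assms(2) by (simp add: sum.delta)
  finally have "gc_admissible m v k T"
    unfolding gc_admissible_def using P assms(3) by (auto simp: T_def)
  then obtain B where "B \<in> set F" "gc_contained m T B"
    using assms(1) by (auto simp: is_GC_def)
  then show "\<exists>B\<in>set (map (\<lambda>B. B i) F). P \<subseteq> B"
  proof -
    have "P \<subseteq> B i" using \<open>gc_contained m T B\<close> assms(2) unfolding gc_contained_def T_def
      by (metis (full_types))
    then show ?thesis using \<open>B \<in> set F\<close> by auto
  qed
qed

theorem corollary3p10:
  fixes m :: nat and v k :: "nat \<Rightarrow> nat"
  assumes "\<forall>i<m. 0 < k i \<and> k i \<le> v i"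
    and "(\<Sum>i<m. k i) \<ge> 2"
  shows "\<forall>i<m. k i \<noteq> 1 \<longrightarrow> cov_num (v i) (k i) \<le> GC_num m v k"
proof (intro allI impI)
  fix i assume i: "i < m" "k i \<noteq> 1"
  then have k2: "k i \<ge> 2" using assms(1) by (metis One_nat_def Suc_1 Suc_leI le_neq_implies_less)
  obtain F0 where "is_GC m v k F0" using GC_exists assms(1) by blast
  then have "\<exists>n. \<exists>F. is_GC m v k F \<and> length F = n" by blast
  then have "\<exists>F. is_GC m v k F \<and> length F = GC_num m v k"
    unfolding GC_num_def by (rule LeastI_ex)
  then obtain F where F: "is_GC m v k F" "length F = GC_num m v k" by blast
  have "is_covering (v i) (k i) (map (\<lambda>B. B i) F)" using GC_cov[OF F(1) i(1) k2] .
  then have "cov_num (v i) (k i) \<le> length (map (\<lambda>B. B i) F)"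
    unfolding cov_num_def by (intro Least_le) blast
  then show "cov_num (v i) (k i) \<le> GC_num m v k" using F(2) by simp
qed

end
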